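(* In the free group $\mathbb{F}_2$ on $a,b$, set $a_0:=b^{-1}$, $b_0:=aba^{-1}$ and recursively $a_n:=a_{n-1}b_{n-1}$, $b_n:=a_{n-1}^{-1}b_{n-1}^{-1}$ for $n\ge1$. Let $\sigma,\tau\in\mathrm{Aut}(\mathbb{F}_2)$ be defined by $\sigma(a)=a^{-1},\sigma(b)=b^{-1}$ and $\tau(a)=a,\tau(b)=b^{-1}$. Let $n\in\mathbb{N}$. Then: (1) if $n\equiv0\pmod3$, then $a\,\sigma(a_n)\,a^{-1}=b_n$ (and so $a_n=a\,\sigma(b_n)\,a^{-1}$); (2) if $n\equiv1\pmod3$, then $\tau(a_n)=b_n$ (and so $\tau(b_n)=a_n$); (3) if $n\equiv2\pmod3$, then $\tau(a_n)=b_n^{-1}$. *)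

theory Defs
  imports Main
begin

text \<open>The free group F2 on generators a, b, modelled by freely reduced words.
  A letter is a pair (e, g): g = False is the generator a, g = True is b;
  e = True means the inverse of the generator.\<close>

type_synonym letter = "bool \<times> bool"
type_synonym word = "letter list"

definition inv_letter :: "letter \<Rightarrow> letter" where
  "inv_letter l = (\<not> fst l, snd l)"

definition red_cons :: "letter \<Rightarrow> word \<Rightarrow> word" where
  "red_cons x ys = (case ys of [] \<Rightarrow> [x]
     | y # ys' \<Rightarrow> (if y = inv_letter x then ys' else x # ys))"

definition red :: "word \<Rightarrow> word" where
  "red xs = foldr red_cons xs []"

definition reduced :: "word \<Rightarrow> bool" where
  "reduced xs \<longleftrightarrow> (\<forall>i. Suc i < length xs \<longrightarrow> xs ! Suc i \<noteq> inv_letter (xs ! i))"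

definition fmul :: "word \<Rightarrow> word \<Rightarrow> word" (infixl "\<cdot>" 70) where
  "x \<cdot> y = red (x @ y)"

definition finv :: "word \<Rightarrow> word" where
  "finv x = rev (map inv_letter x)"

definition gen_a :: word where "gen_a = [(False, False)]"
definition gen_b :: word where "gen_b = [(False, True)]"

definition hom_ext :: "word \<Rightarrow> word \<Rightarrow> word \<Rightarrow> word" where
  "hom_ext ia ib w = red (concat (map (\<lambda>l. let v = (if snd l then ib else ia)
                                           in if fst l then finv v else v) w))"

definition sigma :: "word \<Rightarrow> word" where
  "sigma = hom_ext (finv gen_a) (finv gen_b)"

definition tau :: "word \<Rightarrow> word" where
  "tau = hom_ext gen_a (finv gen_b)"

fun ab_seq :: "nat \<Rightarrow> word \<times> word" where
  "ab_seq 0 = (finv gen_b, gen_a \<cdot> gen_b \<cdot> finv gen_a)"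
| "ab_seq (Suc n) = (let (x, y) = ab_seq n in (x \<cdot> y, finv x \<cdot> finv y))"

definition a_seq :: "nat \<Rightarrow> word" where "a_seq n = fst (ab_seq n)"
definition b_seq :: "nat \<Rightarrow> word" where "b_seq n = snd (ab_seq n)"

end

theory Submission
  imports Defs
begin

lemma inv_inv[simp]: "inv_letter (inv_letter x) = x"
  by (simp add: inv_letter_def)

lemma finv_Cons: "finv (x # xs) = finv xs @ [inv_letter x]"
  by (simp add: finv_def)

lemma finv_finv[simp]: "finv (finv x) = x"
  by (simp add: finv_def rev_map comp_def)

fun rd :: "word \<Rightarrow> bool" where
  "rd [] = True"
| "rd [x] = True"
| "rd (x # y # ys) = (y \<noteq> inv_letter x \<and> rd (y # ys))"

lemma rd_Cons: "rd (x # xs) \<longleftrightarrow> rd xs \<and> (xs \<noteq> [] \<longrightarrow> hd xs \<noteq> inv_letter x)"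
  by (cases xs) auto

lemma rd_snoc: "rd (xs @ [y]) \<longleftrightarrow> rd xs \<and> (xs \<noteq> [] \<longrightarrow> y \<noteq> inv_letter (last xs))"
  by (induction xs rule: rd.induct) auto

lemma last_finv: "xs \<noteq> [] \<Longrightarrow> last (finv xs) = inv_letter (hd xs)"
  by (cases xs) (auto simp: finv_def)

lemma finv_Nil_iff[simp]: "finv xs = [] \<longleftrightarrow> xs = []"
  by (simp add: finv_def)

lemma rd_finv: "rd xs \<Longrightarrow> rd (finv xs)"
proof (induction xs)
  case Nil then show ?case by (simp add: finv_def)
next
  case (Cons x xs)
  then show ?case
    by (auto simp: finv_Cons rd_snoc rd_Cons last_finv)
qed

lemma rd_tl: "rd (y # z) \<Longrightarrow> rd z"
  by (cases z) auto

lemma rd_red_cons: "rd z \<Longrightarrow> rd (red_cons x z)"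
  by (cases z) (auto simp: red_cons_def dest: rd_tl)

lemma rd_F: "rd z \<Longrightarrow> rd (foldr red_cons xs z)"
  by (induction xs) (auto intro: rd_red_cons)

lemma rd_red: "rd (red xs)"
  by (simp add: red_def rd_F)

lemma red_rd: "rd z \<Longrightarrow> red z = z"
proof (induction z)
  case Nil then show ?case by (simp add: red_def)
next
  case (Cons y z)
  then have "red z = z" using rd_tl by blast
  then show ?case using Cons.prems
    by (cases z) (auto simp: red_def red_cons_def)
qed

lemma red_red[simp]: "red (red x) = red x"
  by (simp add: red_rd rd_red)

lemma inv_neq: "inv_letter x \<noteq> x"
  by (simp add: inv_letter_def prod_eq_iff)

lemma cancel: "rd z \<Longrightarrow> red_cons x (red_cons (inv_letter x) z) = z"
proof (cases z)
  case Nil then show ?thesis by (simp add: red_cons_def inv_neq)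
next
  case (Cons y z')
  assume r: "rd z"
  show ?thesis
  proof (cases "y = x")
    case True
    then show ?thesis using Cons r
      by (cases z') (auto simp: red_cons_def inv_neq)
  next
    case False
    then show ?thesis using Cons by (auto simp: red_cons_def inv_neq)
  qed
qed

lemma F_red_cons: "rd z \<Longrightarrow> foldr red_cons (red_cons x w) z = red_cons x (foldr red_cons w z)"
proof (cases w)
  case (Cons y w')
  assume r: "rd z"
  show ?thesis
  proof (cases "y = inv_letter x")
    case True
    then show ?thesis using Cons cancel[OF rd_F[OF r, of w']]
      by (simp add: red_cons_def)
  qed (use Cons in \<open>simp add: red_cons_def\<close>)
qed (simp add: red_cons_def)

lemma F_F: "rd z \<Longrightarrow> foldr red_cons (foldr red_cons xs []) z = foldr red_cons xs z"
  by (induction xs) (simp_all add: F_red_cons)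

lemma red_append: "red (xs @ ys) = foldr red_cons xs (red ys)"
  by (simp add: red_def)

lemma red_left[simp]: "red (red xs @ ys) = red (xs @ ys)"
  by (simp add: red_append) (simp add: red_def F_F rd_red[unfolded red_def])

lemma red_right[simp]: "red (xs @ red ys) = red (xs @ ys)"
  by (simp add: red_append)

lemma assoc: "x \<cdot> y \<cdot> z = x \<cdot> (y \<cdot> z)"
proof -
  have "x \<cdot> y \<cdot> z = red (red (x @ y) @ z)" by (simp add: fmul_def)
  also have "\<dots> = red (x @ y @ z)" by simp
  also have "\<dots> = red (x @ red (y @ z))" by simp
  finally show ?thesis by (simp add: fmul_def)
qed

lemma F_cancel: "rd z \<Longrightarrow> foldr red_cons (xs @ finv xs) z = z"
proof (induction xs arbitrary: z)
  case Nil then show ?case by (simp add: finv_def)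
next
  case (Cons x xs)
  have "foldr red_cons ((x # xs) @ finv (x # xs)) z
      = red_cons x (foldr red_cons (xs @ finv xs) (red_cons (inv_letter x) z))"
    by (simp add: finv_Cons)
  also have "\<dots> = red_cons x (red_cons (inv_letter x) z)"
    using Cons rd_red_cons by simp
  also have "\<dots> = z" using Cons cancel by simp
  finally show ?case .
qed

lemma red_cancel: "red (xs @ finv xs @ ys) = red ys"
  using F_cancel[OF rd_red[of ys], of xs] by (simp add: red_def)

lemma fmul_finv: "x \<cdot> finv x = []"
  using red_cancel[of x "[]"] by (simp add: fmul_def red_def)

lemma finv_fmul: "finv x \<cdot> x = []"
  using fmul_finv[of "finv x"] by simp

lemma rd_fmul: "rd (x \<cdot> y)"
  by (simp add: fmul_def rd_red)

lemma fmul_Nil: "rd x \<Longrightarrow> x \<cdot> [] = x"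
  by (simp add: fmul_def red_rd)

lemma Nil_fmul: "rd x \<Longrightarrow> [] \<cdot> x = x"
  by (simp add: fmul_def red_rd)

lemma uniq: "rd v \<Longrightarrow> rd u \<Longrightarrow> v \<cdot> u = [] \<Longrightarrow> v = finv u"
proof -
  assume a: "rd v" "rd u" "v \<cdot> u = []"
  have "v = v \<cdot> (u \<cdot> finv u)" using a by (simp add: fmul_finv fmul_Nil)
  also have "\<dots> = (v \<cdot> u) \<cdot> finv u" by (simp add: assoc)
  also have "\<dots> = finv u" using a by (simp add: Nil_fmul rd_finv)
  finally show ?thesis .
qed

lemma finv_mul: "finv (x \<cdot> y) = finv y \<cdot> finv x"
proof -
  have "(finv y \<cdot> finv x) \<cdot> (x \<cdot> y) = finv y \<cdot> ((finv x \<cdot> x) \<cdot> y)"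
    by (simp add: assoc)
  also have "\<dots> = finv y \<cdot> y"
  proof -
    have "red (finv x @ x @ y) = red y" using red_cancel[of "finv x" y] by simp
    then have "red (finv y @ red (finv x @ x @ y)) = red (finv y @ red y)" by simp
    then show ?thesis by (simp add: fmul_def)
  qed
  also have "\<dots> = []" by (simp add: finv_fmul)
  finally show ?thesis using uniq rd_fmul by metis
qed

lemma nil_mid: "x \<cdot> [] \<cdot> z = x \<cdot> z"
  by (simp add: fmul_def)

lemma hom_A:
  assumes g: "\<And>l. g (inv_letter l) = finv (g l)"
  shows "red (concat (map g (red_cons x u))) = red (g x @ concat (map g u))"
proof (cases u)
  case (Cons y u')
  show ?thesis
  proof (cases "y = inv_letter x")
    case True
    then show ?thesis using Cons red_cancel[of "g x"] g
      by (simp add: red_cons_def)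
  qed (use Cons in \<open>simp add: red_cons_def\<close>)
qed (simp add: red_cons_def)

lemma hom_B:
  assumes g: "\<And>l. g (inv_letter l) = finv (g l)"
  shows "red (concat (map g (foldr red_cons w z))) = red (concat (map g w) @ concat (map g z))"
proof (induction w)
  case Nil then show ?case by simp
next
  case (Cons x w)
  have "red (concat (map g (foldr red_cons (x # w) z)))
      = red (g x @ concat (map g (foldr red_cons w z)))"
    by (simp add: hom_A[where g=g, OF g])
  also have "\<dots> = red (g x @ red (concat (map g (foldr red_cons w z))))" by simp
  also have "\<dots> = red (g x @ red (concat (map g w) @ concat (map g z)))" using Cons by simp
  also have "\<dots> = red (concat (map g (x # w)) @ concat (map g z))" by simp
  finally show ?case .
qed

lemma hom_mul:
  "hom_ext ia ib (x \<cdot> y) = hom_ext ia ib x \<cdot> hom_ext ia ib y"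
proof -
  define g where "g = (\<lambda>l::letter. let v = (if snd l then ib else ia) in if fst l then finv v else v)"
  have g: "\<And>l. g (inv_letter l) = finv (g l)"
    by (auto simp: g_def inv_letter_def Let_def)
  have "hom_ext ia ib (x \<cdot> y) = red (concat (map g (foldr red_cons (x @ y) [])))"
    by (simp add: hom_ext_def g_def fmul_def red_def)
  also have "\<dots> = red (concat (map g x) @ concat (map g y))"
    using hom_B[where g=g, OF g, of "x @ y" "[]"] by simp
  also have "\<dots> = red (red (concat (map g x)) @ red (concat (map g y)))" by simp
  finally show ?thesis by (simp add: hom_ext_def g_def fmul_def)
qed

lemma rd_hom: "rd (hom_ext ia ib x)"
  by (simp add: hom_ext_def rd_red)

lemma hom_Nil: "hom_ext ia ib [] = []"
  by (simp add: hom_ext_def red_def)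

lemma hom_finv: "hom_ext ia ib (finv x) = finv (hom_ext ia ib x)"
proof -
  have "hom_ext ia ib (finv x) \<cdot> hom_ext ia ib x = []"
    by (simp add: hom_mul[symmetric] finv_fmul hom_Nil)
  then show ?thesis using uniq rd_hom by blast
qed

definition phi :: "word \<Rightarrow> word" where
  "phi x = gen_a \<cdot> sigma x \<cdot> finv gen_a"

lemma phi_mul: "phi (x \<cdot> y) = phi x \<cdot> phi y"
proof -
  have "phi x \<cdot> phi y = gen_a \<cdot> (sigma x \<cdot> ((finv gen_a \<cdot> gen_a) \<cdot> (sigma y \<cdot> finv gen_a)))"
    by (simp add: phi_def assoc)
  also have "\<dots> = gen_a \<cdot> (sigma x \<cdot> ([] \<cdot> (sigma y \<cdot> finv gen_a)))"
    by (simp add: finv_fmul)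
  also have "\<dots> = gen_a \<cdot> (sigma x \<cdot> (sigma y \<cdot> finv gen_a))"
    by (simp add: Nil_fmul rd_fmul)
  finally show ?thesis by (simp add: phi_def sigma_def hom_mul assoc)
qed

lemma phi_finv: "phi (finv x) = finv (phi x)"
  by (simp add: phi_def sigma_def hom_finv finv_mul assoc)

lemma tau_mul: "tau (x \<cdot> y) = tau x \<cdot> tau y"
  by (simp add: tau_def hom_mul)

lemma tau_finv: "tau (finv x) = finv (tau x)"
  by (simp add: tau_def hom_finv)

definition cls :: "nat \<Rightarrow> (word \<Rightarrow> word) \<Rightarrow> nat \<Rightarrow> bool" where
  "cls k \<psi> n = (let a = a_seq n; b = b_seq n in
     (k = 0 \<longrightarrow> \<psi> a = finv a \<and> \<psi> b = finv b) \<and>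
     (k = 1 \<longrightarrow> \<psi> a = b \<and> \<psi> b = a) \<and>
     (k = 2 \<longrightarrow> \<psi> a = finv b \<and> \<psi> b = finv a))"

lemma seq_Suc: "a_seq (Suc n) = a_seq n \<cdot> b_seq n" "b_seq (Suc n) = finv (a_seq n) \<cdot> finv (b_seq n)"
  by (simp_all add: a_seq_def b_seq_def split: prod.splits)

lemma cls_step:
  assumes m: "\<And>x y. \<psi> (x \<cdot> y) = \<psi> x \<cdot> \<psi> y" and i: "\<And>x. \<psi> (finv x) = finv (\<psi> x)"
    and c: "cls (k mod 3) \<psi> n"
  shows "cls (Suc k mod 3) \<psi> (Suc n)"
proof -
  have "k mod 3 = 0 \<or> k mod 3 = 1 \<or> k mod 3 = 2" by arith
  moreover have "Suc k mod 3 = (if k mod 3 = 2 then 0 else Suc (k mod 3))" by (simp add: mod_Suc)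
  ultimately show ?thesis using c
    by (auto simp: cls_def Let_def seq_Suc m i finv_mul)
qed

lemma cls_all:
  assumes m: "\<And>x y. \<psi> (x \<cdot> y) = \<psi> x \<cdot> \<psi> y" and i: "\<And>x. \<psi> (finv x) = finv (\<psi> x)"
    and c: "cls (k mod 3) \<psi> 0"
  shows "cls ((k + n) mod 3) \<psi> n"
proof (induction n)
  case 0 then show ?case using c by simp
next
  case (Suc n) then show ?case using cls_step[OF m i, of "k + n" n] by simp
qed

lemma tau0: "cls 0 tau 0"
  by (simp add: cls_def a_seq_def b_seq_def tau_def hom_ext_def fmul_def red_def red_cons_def
      finv_def inv_letter_def gen_a_def gen_b_def)

lemma phi0: "cls 1 phi 0"
  by (simp add: cls_def a_seq_def b_seq_def phi_def sigma_def hom_ext_def fmul_def red_def red_cons_def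
      finv_def inv_letter_def gen_a_def gen_b_def)

theorem lemma2p3:
  fixes n :: nat
  shows "(n mod 3 = 0 \<longrightarrow>
            gen_a \<cdot> sigma (a_seq n) \<cdot> finv gen_a = b_seq n \<and>
            a_seq n = gen_a \<cdot> sigma (b_seq n) \<cdot> finv gen_a)
       \<and> (n mod 3 = 1 \<longrightarrow> tau (a_seq n) = b_seq n \<and> tau (b_seq n) = a_seq n)
       \<and> (n mod 3 = 2 \<longrightarrow> tau (a_seq n) = finv (b_seq n))"
proof -
  have t: "cls (n mod 3) tau n" using cls_all[OF tau_mul tau_finv, of 0 n] tau0 by simp
  have p: "cls ((1 + n) mod 3) phi n" using cls_all[OF phi_mul phi_finv, of 1 n] phi0 by simp
  show ?thesis
  proof (intro conjI impI)
    assume "n mod 3 = 0"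
    then have "(1 + n) mod 3 = 1" by arith
    then show "gen_a \<cdot> sigma (a_seq n) \<cdot> finv gen_a = b_seq n"
      "a_seq n = gen_a \<cdot> sigma (b_seq n) \<cdot> finv gen_a"
      using p by (auto simp: cls_def Let_def phi_def)
  next
    assume "n mod 3 = 1"
    then show "tau (a_seq n) = b_seq n" "tau (b_seq n) = a_seq n"
      using t by (auto simp: cls_def Let_def)
  next
    assume "n mod 3 = 2"
    then show "tau (a_seq n) = finv (b_seq n)"
      using t by (auto simp: cls_def Let_def)
  qed
qed

end
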